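(* Let $q$ be prime, let $[[n,n-k,d]]_q$ be a non-degenerate stabilizer code, and let $M\in\mathbb{Z}^{k\times 2n}$ be an invariant form of it with maximal absolute entry $B$. Let $d^*$ be the integer distance of $M$, i.e. the minimum weight of a nonzero integer vector $e\in\mathbb{Z}^{2n}$ with $e\odot m=0$ over $\mathbb{Z}$ for every row $m$ of $M$; then $d\le d^*\le k$. For every prime $$p> B^{2(d^*-1)}\,\bigl(2(d^*-1)\bigr)^{d^*-1},$$ the code given by $M \bmod p$ has distance exactly $d^*$, so the distance cannot be further improved by embedding into more levels. In particular, the same conclusion holds for every prime $p> B^{2(k-1)}(2(k-1))^{k-1}$.
   Context: An $n$-qudit Pauli is represented by an exponent vector $(a|b)$ (over $\mathbb{Z}_r$ for $r$ prime, or over $\mathbb{Z}$). Symplectic product: $u\odot v=\sum_{l=1}^n (v_{z,l}u_{x,l}-v_{x,l}u_{z,l})$. Weight of $(a|b)$: number of $l$ with $(a_l,b_l)\ne(0,0)$. The distance of a code over $r$ levels with generator matrix $G$ is the minimum weight of a nonzero $e\in\mathbb{Z}_r^{2n}$ symplectically orthogonal mod $r$ to every row of $G$; non-degenerate means every non-identity stabilizer group element has weight at least $d$. An invariant form of a code with generator matrix $S$ over $\mathbb{Z}_q$ is an integer matrix $M\equiv S \pmod q$ whose rows have pairwise integer symplectic product $0$. *)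

theory Defs
  imports "HOL-Number_Theory.Number_Theory"
begin

text \<open>An n-qudit Pauli exponent vector (a|b) is a function
  e :: nat => int with x-part a_l = e l and z-part b_l = e (n + l) for l < n,
  and e j = 0 for j >= 2n.\<close>

definition sympl :: "nat \<Rightarrow> (nat \<Rightarrow> int) \<Rightarrow> (nat \<Rightarrow> int) \<Rightarrow> int" where
  "sympl n u v = (\<Sum>l<n. v (n + l) * u l - v l * u (n + l))"

definition weight :: "nat \<Rightarrow> (nat \<Rightarrow> int) \<Rightarrow> nat" where
  "weight n e = card {l. l < n \<and> (e l, e (n + l)) \<noteq> (0, 0)}"

text \<open>Vectors in Z_r^{2n}, represented by integers in {0..<r}.\<close>
definition vec_mod :: "int \<Rightarrow> nat \<Rightarrow> (nat \<Rightarrow> int) \<Rightarrow> bool" where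
  "vec_mod r n e \<longleftrightarrow> (\<forall>j. (j < 2 * n \<longrightarrow> 0 \<le> e j \<and> e j < r) \<and> (2 * n \<le> j \<longrightarrow> e j = 0))"

definition nonzero_vec :: "nat \<Rightarrow> (nat \<Rightarrow> int) \<Rightarrow> bool" where
  "nonzero_vec n e \<longleftrightarrow> (\<exists>j < 2 * n. e j \<noteq> 0)"

definition code_distance :: "int \<Rightarrow> nat \<Rightarrow> nat \<Rightarrow> (nat \<Rightarrow> nat \<Rightarrow> int) \<Rightarrow> nat" where
  "code_distance r n k G = (LEAST w. \<exists>e. vec_mod r n e \<and> nonzero_vec n e \<and>
      (\<forall>i < k. sympl n e (G i) mod r = 0) \<and> weight n e = w)"

definition int_distance :: "nat \<Rightarrow> nat \<Rightarrow> (nat \<Rightarrow> nat \<Rightarrow> int) \<Rightarrow> nat" where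
  "int_distance n k M = (LEAST w. \<exists>e. (\<forall>j \<ge> 2 * n. e j = 0) \<and> nonzero_vec n e \<and>
      (\<forall>i < k. sympl n e (M i) = 0) \<and> weight n e = w)"

definition stabilizer_code :: "int \<Rightarrow> nat \<Rightarrow> nat \<Rightarrow> (nat \<Rightarrow> nat \<Rightarrow> int) \<Rightarrow> bool" where
  "stabilizer_code q n k S \<longleftrightarrow>
     k \<le> n \<and>
     (\<forall>i < k. vec_mod q n (S i)) \<and>
     (\<forall>i < k. \<forall>i' < k. sympl n (S i) (S i') mod q = 0) \<and>
     (\<forall>c :: nat \<Rightarrow> int. (\<forall>j < 2 * n. (\<Sum>i<k. c i * S i j) mod q = 0) \<longrightarrow> (\<forall>i < k. c i mod q = 0))"

text \<open>Non-degenerate: every non-identity element of the stabilizer group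
  (a Z_q-linear combination of the rows, reduced mod q) has weight at least d.\<close>
definition nondegenerate :: "int \<Rightarrow> nat \<Rightarrow> nat \<Rightarrow> (nat \<Rightarrow> nat \<Rightarrow> int) \<Rightarrow> nat \<Rightarrow> bool" where
  "nondegenerate q n k S d \<longleftrightarrow>
     (\<forall>c :: nat \<Rightarrow> int.
        let g = (\<lambda>j. if j < 2 * n then (\<Sum>i<k. c i * S i j) mod q else 0)
        in nonzero_vec n g \<longrightarrow> d \<le> weight n g)"

definition invariant_form :: "int \<Rightarrow> nat \<Rightarrow> nat \<Rightarrow> (nat \<Rightarrow> nat \<Rightarrow> int) \<Rightarrow> (nat \<Rightarrow> nat \<Rightarrow> int) \<Rightarrow> bool" where
  "invariant_form q n k S M \<longleftrightarrow>
     (\<forall>i < k. \<forall>j < 2 * n. [M i j = S i j] (mod q)) \<and>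
     (\<forall>i < k. \<forall>j \<ge> 2 * n. M i j = 0) \<and>
     (\<forall>i < k. \<forall>i' < k. sympl n (M i) (M i') = 0)"

definition max_abs_entry :: "nat \<Rightarrow> nat \<Rightarrow> (nat \<Rightarrow> nat \<Rightarrow> int) \<Rightarrow> int" where
  "max_abs_entry n k M = Max {\<bar>M i j\<bar> | i j. i < k \<and> j < 2 * n}"

end

theory Submission
  imports Defs "Jordan_Normal_Form.Determinant"
begin


lemma proj_le:
  fixes a b :: "nat \<Rightarrow> 'a::linordered_field" and N :: nat
  defines "c \<equiv> (\<Sum>l<N. a l * b l) / (\<Sum>l<N. b l * b l)"
  shows "(\<Sum>l<N. (a l - c * b l) * (a l - c * b l)) \<le> (\<Sum>l<N. a l * a l)"
proof -
  define X where "X = (\<Sum>l<N. a l * a l)"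
  define Y where "Y = (\<Sum>l<N. a l * b l)"
  define Z where "Z = (\<Sum>l<N. b l * b l)"
  have Z0: "Z \<ge> 0" unfolding Z_def by (intro sum_nonneg) auto
  have e: "(\<Sum>l<N. (a l - c * b l) * (a l - c * b l)) = X - 2 * c * Y + c * c * Z"
    unfolding X_def Y_def Z_def
    by (simp add: algebra_simps sum.distrib sum_subtractf sum_distrib_left)
  show ?thesis
  proof (cases "Z = 0")
    case True
    then have "c = 0" unfolding c_def Z_def by simp
    then show ?thesis using e X_def by simp
  next
    case False
    then have Zp: "Z > 0" using Z0 by simp
    have cY: "c = Y / Z" unfolding c_def Y_def Z_def by simp
    have "X - 2 * c * Y + c * c * Z = X - Y * Y / Z" unfolding cY using Zp
      by (simp add: field_simps power2_eq_square)
    moreover have "Y * Y / Z \<ge> 0" using Zp by simp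
    ultimately show ?thesis using e X_def by simp
  qed
qed

lemma prod_list_map_one: "prod_list (map (\<lambda>i. 1) xs) = 1"
  by (induct xs) auto

definition gmat :: "nat \<Rightarrow> nat \<Rightarrow> (nat \<Rightarrow> nat \<Rightarrow> 'a) \<Rightarrow> 'a mat" where
  "gmat s N f = mat s N (\<lambda>(i,l). f i l)"

definition gram :: "nat \<Rightarrow> nat \<Rightarrow> (nat \<Rightarrow> nat \<Rightarrow> 'a::comm_ring_1) \<Rightarrow> 'a mat" where
  "gram s N f = mat s s (\<lambda>(i,j). \<Sum>l<N. f i l * f j l)"

lemma gram_eq: "gmat s N f * transpose_mat (gmat s N f) = gram s N f"
  by (rule eq_matI) (auto simp: gmat_def gram_def scalar_prod_def atLeast0LessThan)

lemma gmat_carrier[simp]: "gmat s N f \<in> carrier_mat s N"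
  by (simp add: gmat_def)

lemma gram_carrier[simp]: "gram s N f \<in> carrier_mat s s"
  by (simp add: gram_def)

lemma hadamard_gram:
  fixes f :: "nat \<Rightarrow> nat \<Rightarrow> 'a::linordered_field"
  shows "det (gram s N f) \<le> (\<Prod>i<s. \<Sum>l<N. f i l * f i l)"
proof (induction s arbitrary: f)
  case 0
  have "gram 0 N f \<in> carrier_mat 0 0" by simp
  then show ?case by simp
next
  case (Suc s)
  define Z where "Z = (\<Sum>l<N. f 0 l * f 0 l)"
  define c where "c i = (\<Sum>l<N. f i l * f 0 l) / Z" for i
  define g where "g i l = (if i = 0 then f 0 l else f i l - c i * f 0 l)" for i l
  define h where "h i l = g (Suc i) l" for i l
  define E where "E = mat (Suc s) (Suc s) (\<lambda>(i,a). if a = i then 1 else if a = 0 then - c i else 0)"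
  have Ec: "E \<in> carrier_mat (Suc s) (Suc s)" unfolding E_def by simp
  have FE: "gmat (Suc s) N g = E * gmat (Suc s) N f"
  proof (rule eq_matI)
    fix i l assume i: "i < dim_row (E * gmat (Suc s) N f)" and l: "l < dim_col (E * gmat (Suc s) N f)"
    then have i': "i < Suc s" and l': "l < N" using Ec by (auto simp: gmat_def)
    have "(E * gmat (Suc s) N f) $$ (i, l) = (\<Sum>a<Suc s. E $$ (i,a) * f a l)"
      using i' l' Ec by (simp add: scalar_prod_def gmat_def atLeast0LessThan)
    also have "\<dots> = (\<Sum>a<Suc s. (if a = i then f a l else 0) + (if a = 0 \<and> i \<noteq> 0 then - c i * f a l else 0))"
      using i' by (intro sum.cong) (auto simp: E_def)
    also have "\<dots> = g i l" using i' by (simp add: sum.distrib g_def)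
    finally show "gmat (Suc s) N g $$ (i, l) = (E * gmat (Suc s) N f) $$ (i, l)"
      using i' l' by (simp add: gmat_def)
  qed (auto simp: gmat_def E_def)
  have detE: "det E = 1"
  proof -
    have "det E = prod_list (diag_mat E)"
      by (rule det_lower_triangular[OF _ Ec]) (auto simp: E_def)
    also have "diag_mat E = map (\<lambda>i. 1) [0..<Suc s]"
      unfolding diag_mat_def using Ec by (intro map_cong) (auto simp: E_def)
    finally show ?thesis by (simp only: prod_list_map_one)
  qed
  have "gram (Suc s) N g = E * gram (Suc s) N f * transpose_mat E"
  proof -
    have "gram (Suc s) N g = gmat (Suc s) N g * transpose_mat (gmat (Suc s) N g)" by (simp add: gram_eq)
    also have "\<dots> = (E * gmat (Suc s) N f) * (transpose_mat (gmat (Suc s) N f) * transpose_mat E)"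
      unfolding FE by (subst transpose_mult[OF Ec gmat_carrier]) simp
    also have "\<dots> = E * (gmat (Suc s) N f * transpose_mat (gmat (Suc s) N f)) * transpose_mat E"
    proof -
      let ?F = "gmat (Suc s) N f"
      have c1: "?F \<in> carrier_mat (Suc s) N" "transpose_mat ?F \<in> carrier_mat N (Suc s)"
        "transpose_mat E \<in> carrier_mat (Suc s) (Suc s)" using Ec by auto
      have "(E * ?F) * (transpose_mat ?F * transpose_mat E) = E * (?F * (transpose_mat ?F * transpose_mat E))"
        using assoc_mult_mat[OF Ec c1(1) mult_carrier_mat[OF c1(2) c1(3)]] .
      also have "?F * (transpose_mat ?F * transpose_mat E) = (?F * transpose_mat ?F) * transpose_mat E"
        using assoc_mult_mat[OF c1(1) c1(2) c1(3), symmetric] .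
      also have "E * ((?F * transpose_mat ?F) * transpose_mat E) = (E * (?F * transpose_mat ?F)) * transpose_mat E"
        using assoc_mult_mat[OF Ec mult_carrier_mat[OF c1(1) c1(2)] c1(3), symmetric] .
      finally show ?thesis .
    qed
    finally show ?thesis by (simp add: gram_eq)
  qed
  then have dg: "det (gram (Suc s) N g) = det (gram (Suc s) N f)"
    using Ec detE by (simp add: det_mult[of _ "Suc s"] det_transpose)
  have row0: "gram (Suc s) N g $$ (0, j) = 0" if "0 < j" "j < Suc s" for j
  proof (cases "Z = 0")
    case True
    then have "\<forall>l\<in>{..<N}. f 0 l * f 0 l = 0" unfolding Z_def
      by (subst sum_nonneg_eq_0_iff[symmetric]) auto
    then show ?thesis using that by (simp add: gram_def g_def)
  next
    case False
    have "gram (Suc s) N g $$ (0, j) = (\<Sum>l<N. f 0 l * f j l) - c j * Z"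
      using that by (simp add: gram_def g_def Z_def algebra_simps sum_subtractf sum_distrib_left)
    also have "\<dots> = 0" using False by (simp add: c_def mult.commute)
    finally show ?thesis .
  qed
  have "det (gram (Suc s) N g) = (\<Sum>j<Suc s. gram (Suc s) N g $$ (0,j) * cofactor (gram (Suc s) N g) 0 j)"
    by (rule laplace_expansion_row) auto
  also have "\<dots> = gram (Suc s) N g $$ (0,0) * cofactor (gram (Suc s) N g) 0 0"
    using row0 by (subst sum.lessThan_Suc_shift) simp
  also have "\<dots> = Z * det (gram s N h)"
  proof -
    have "mat_delete (gram (Suc s) N g) 0 0 = gram s N h"
      by (rule eq_matI) (auto simp: mat_delete_def gram_def h_def)
    then show ?thesis by (simp add: cofactor_def gram_def g_def Z_def)
  qed
  finally have dZ: "det (gram (Suc s) N f) = Z * det (gram s N h)" using dg by simp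
  have Z0: "Z \<ge> 0" unfolding Z_def by (intro sum_nonneg) auto
  have "det (gram s N h) \<le> (\<Prod>i<s. \<Sum>l<N. h i l * h i l)" by (rule Suc.IH)
  also have "\<dots> \<le> (\<Prod>i<s. \<Sum>l<N. f (Suc i) l * f (Suc i) l)"
  proof (rule prod_mono)
    fix i assume "i \<in> {..<s}"
    show "0 \<le> (\<Sum>l<N. h i l * h i l) \<and> (\<Sum>l<N. h i l * h i l) \<le> (\<Sum>l<N. f (Suc i) l * f (Suc i) l)"
      using proj_le[of "f (Suc i)" "f 0" N]
      by (auto intro: sum_nonneg simp: h_def g_def c_def Z_def)
  qed
  finally have "Z * det (gram s N h) \<le> Z * (\<Prod>i<s. \<Sum>l<N. f (Suc i) l * f (Suc i) l)"
    using Z0 by (rule mult_left_mono)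
  moreover have "(\<Prod>i<Suc s. \<Sum>l<N. f i l * f i l) = Z * (\<Prod>i<s. \<Sum>l<N. f (Suc i) l * f (Suc i) l)"
    by (simp only: prod.lessThan_Suc_shift Z_def)
  ultimately show ?case using dZ by simp
qed



definition tk :: "(nat \<Rightarrow> nat \<Rightarrow> int) \<Rightarrow> nat set \<Rightarrow> nat set \<Rightarrow> bool" where
  "tk A R I \<longleftrightarrow> (\<forall>y. (\<forall>i\<in>R. (\<Sum>j\<in>I. A i j * y j) = 0) \<longrightarrow> (\<forall>j\<in>I. y j = 0))"

lemma kernel_from_vec:
  assumes f: "bij_betw f {0..<m} I"
    and v: "v \<in> carrier_vec m" and vne: "v \<noteq> 0\<^sub>v m"
  defines "y \<equiv> (\<lambda>j. if j \<in> I then v $ (inv_into {0..<m} f j) else 0)"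
  shows "\<exists>j\<in>I. y j \<noteq> 0" "\<And>F. (\<Sum>j\<in>I. F j * y j) = (\<Sum>b<m. F (f b) * v $ b)"
proof -
  from vne v obtain b where b: "b < m" "v $ b \<noteq> 0" by (auto simp: vec_eq_iff)
  have fb: "f b \<in> I" using f b by (auto simp: bij_betw_def)
  have "inv_into {0..<m} f (f b) = b" using f b by (auto simp: bij_betw_def inv_into_f_f)
  then show "\<exists>j\<in>I. y j \<noteq> 0" using fb b by (intro bexI[of _ "f b"]) (auto simp: y_def)
  fix F
  have "(\<Sum>j\<in>I. F j * y j) = (\<Sum>b\<in>{0..<m}. F (f b) * y (f b))"
    using sum.reindex_bij_betw[OF f, symmetric] by simp
  also have "\<dots> = (\<Sum>b\<in>{0..<m}. F (f b) * v $ b)"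
  proof (rule sum.cong)
    fix b assume "b \<in> {0..<m}"
    then have "f b \<in> I" "inv_into {0..<m} f (f b) = b" using f by (auto simp: bij_betw_def inv_into_f_f)
    then show "F (f b) * y (f b) = F (f b) * v $ b" by (simp add: y_def)
  qed simp
  finally show "(\<Sum>j\<in>I. F j * y j) = (\<Sum>b<m. F (f b) * v $ b)" by (simp add: atLeast0LessThan)
qed

lemma LA1:
  fixes A :: "nat \<Rightarrow> nat \<Rightarrow> int"
  assumes "finite I" "finite R" "card R < card I"
  shows "\<exists>y. (\<exists>j\<in>I. y j \<noteq> 0) \<and> (\<forall>i\<in>R. (\<Sum>j\<in>I. A i j * y j) = 0)"
proof -
  define m where "m = card I"
  define r where "r = card R"
  obtain f where f: "bij_betw f {0..<m} I" using ex_bij_betw_nat_finite[OF assms(1)] m_def by auto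
  obtain g where g: "bij_betw g {0..<r} R" using ex_bij_betw_nat_finite[OF assms(2)] r_def by auto
  have rm: "r < m" using assms(3) m_def r_def by simp
  define Q where "Q = mat m m (\<lambda>(a,b). if a < r then A (g a) (f b) else 0)"
  have Qc: "Q \<in> carrier_mat m m" by (simp add: Q_def)
  have "det Q = (\<Sum>b<m. Q $$ (r,b) * cofactor Q r b)"
    by (rule laplace_expansion_row[OF Qc rm])
  also have "\<dots> = 0" using rm by (simp add: Q_def)
  finally obtain v where v: "v \<in> carrier_vec m" "v \<noteq> 0\<^sub>v m" "Q *\<^sub>v v = 0\<^sub>v m"
    using det_0_iff_vec_prod_zero[OF Qc] by auto
  define y where "y = (\<lambda>j. if j \<in> I then v $ (inv_into {0..<m} f j) else 0)"
  note K = kernel_from_vec[OF f v(1) v(2)]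
  show ?thesis
  proof (intro exI conjI ballI)
    show "\<exists>j\<in>I. y j \<noteq> 0" using K(1) unfolding y_def .
    fix i assume i: "i \<in> R"
    then obtain a where a: "a < r" "g a = i" using g by (auto simp: bij_betw_def)
    have "(\<Sum>j\<in>I. A i j * y j) = (\<Sum>b<m. A i (f b) * v $ b)" unfolding y_def by (rule K(2))
    also have "\<dots> = (Q *\<^sub>v v) $ a" using a rm v(1)
      by (simp add: Q_def scalar_prod_def atLeast0LessThan row_def)
    also have "\<dots> = 0" using v(3) a rm by simp
    finally show "(\<Sum>j\<in>I. A i j * y j) = 0" .
  qed
qed

lemma LA2:
  fixes A :: "nat \<Rightarrow> nat \<Rightarrow> int"
  assumes I: "finite I"
  shows "finite R \<Longrightarrow> tk A R I \<Longrightarrow> \<exists>R'\<subseteq>R. card R' = card I \<and> tk A R' I"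
proof (induction "card R" arbitrary: R rule: less_induct)
  case less
  consider "card R < card I" | "card R = card I" | "card R > card I" by linarith
  then show ?case
  proof cases
    case 1
    from LA1[OF I less.prems(1) 1, of A] obtain y where
      "\<exists>j\<in>I. y j \<noteq> 0" "\<forall>i\<in>R. (\<Sum>j\<in>I. A i j * y j) = 0" by blast
    then show ?thesis using less.prems(2) unfolding tk_def by blast
  next
    case 2
    then show ?thesis using less.prems(2) by blast
  next
    case 3
    have "\<exists>i\<in>R. tk A (R - {i}) I"
    proof (rule ccontr)
      assume "\<not> (\<exists>i\<in>R. tk A (R - {i}) I)"
      then have "\<forall>i\<in>R. \<exists>y. (\<exists>j\<in>I. y j \<noteq> 0) \<and> (\<forall>i'\<in>R-{i}. (\<Sum>j\<in>I. A i' j * y j) = 0)"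
        unfolding tk_def by blast
      then obtain Y where Y: "\<And>i. i \<in> R \<Longrightarrow> (\<exists>j\<in>I. Y i j \<noteq> 0) \<and> (\<forall>i'\<in>R-{i}. (\<Sum>j\<in>I. A i' j * Y i j) = 0)"
        by metis
      have lam: "(\<Sum>j\<in>I. A i j * Y i j) \<noteq> 0" if i: "i \<in> R" for i
      proof
        assume "(\<Sum>j\<in>I. A i j * Y i j) = 0"
        then have "\<forall>i'\<in>R. (\<Sum>j\<in>I. A i' j * Y i j) = 0" using Y[OF i] by blast
        then have "\<forall>j\<in>I. Y i j = 0" using less.prems(2) unfolding tk_def by blast
        then show False using Y[OF i] by blast
      qed
      from LA1[OF less.prems(1) I 3, of "\<lambda>j i. Y i j"] obtain z where
        z: "\<exists>i\<in>R. z i \<noteq> 0" "\<forall>j\<in>I. (\<Sum>i\<in>R. Y i j * z i) = 0" by blast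
      have "z i0 = 0" if i0: "i0 \<in> R" for i0
      proof -
        have "0 = (\<Sum>j\<in>I. A i0 j * (\<Sum>i\<in>R. Y i j * z i))" using z(2) by simp
        also have "\<dots> = (\<Sum>i\<in>R. z i * (\<Sum>j\<in>I. A i0 j * Y i j))"
          by (simp add: sum_distrib_left sum_distrib_right sum.swap[of _ I] algebra_simps)
        also have "\<dots> = z i0 * (\<Sum>j\<in>I. A i0 j * Y i0 j) + (\<Sum>i\<in>R-{i0}. z i * (\<Sum>j\<in>I. A i0 j * Y i j))"
          using i0 less.prems(1) by (simp add: sum.remove)
        also have "(\<Sum>i\<in>R-{i0}. z i * (\<Sum>j\<in>I. A i0 j * Y i j)) = 0"
          using Y i0 by (intro sum.neutral) auto
        finally show ?thesis using lam[OF i0] by simp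
      qed
      then show False using z(1) by blast
    qed
    then obtain i where i: "i \<in> R" "tk A (R - {i}) I" by blast
    have "card (R - {i}) < card R" using i(1) less.prems(1) by (meson card_Diff1_less)
    from less.hyps[OF this _ i(2)] less.prems(1) obtain R' where "R' \<subseteq> R - {i}" "card R' = card I" "tk A R' I"
      by auto
    then show ?thesis by blast
  qed
qed

lemma hadamard_int:
  fixes f :: "nat \<Rightarrow> nat \<Rightarrow> int"
  shows "(det (gmat m m f))^2 \<le> (\<Prod>i<m. \<Sum>l<m. f i l * f i l)"
proof -
  have "det (gram m m f) = det (gmat m m f) * det (transpose_mat (gmat m m f))"
    unfolding gram_eq[symmetric] by (rule det_mult[of _ m]) auto
  then have e: "det (gram m m f) = (det (gmat m m f))^2"
    by (simp add: det_transpose[of "gmat m m f" m] power2_eq_square)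
  have "map_mat real_of_int (gram m m f) = gram m m (\<lambda>i l. real_of_int (f i l))"
    by (rule eq_matI) (auto simp: gram_def)
  then have "real_of_int (det (gram m m f)) = det (gram m m (\<lambda>i l. real_of_int (f i l)))"
    by (metis of_int_hom.hom_det)
  also have "\<dots> \<le> (\<Prod>i<m. \<Sum>l<m. real_of_int (f i l) * real_of_int (f i l))"
    by (rule hadamard_gram)
  also have "\<dots> = real_of_int (\<Prod>i<m. \<Sum>l<m. f i l * f i l)" by simp
  finally show ?thesis using e by linarith
qed

lemma smult_one_mat_vec:
  fixes c :: int
  assumes "v \<in> carrier_vec m" "b < m"
  shows "((c \<cdot>\<^sub>m 1\<^sub>m m) *\<^sub>v v) $ b = c * v $ b"
proof -
  have "((c \<cdot>\<^sub>m 1\<^sub>m m) *\<^sub>v v) $ b = (\<Sum>i\<in>{0..<m}. c * (if b = i then 1 else 0) * v $ i)"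
    using assms by (simp add: scalar_prod_def row_def)
  also have "\<dots> = (\<Sum>i\<in>{0..<m}. if b = i then c * v $ i else 0)" by (rule sum.cong) auto
  also have "\<dots> = c * v $ b" using assms by simp
  finally show ?thesis .
qed

lemma CP:
  fixes A :: "nat \<Rightarrow> nat \<Rightarrow> int" and p :: nat and B :: int
  assumes I: "finite I" and R: "finite R" and card: "card R = card I" and tk: "tk A R I"
    and p: "prime p" and AB: "\<forall>i\<in>R. \<forall>j\<in>I. \<bar>A i j\<bar> \<le> B"
    and bound: "(int (card I) * B^2)^(card I) < (int p)^2"
    and x: "\<forall>i\<in>R. int p dvd (\<Sum>j\<in>I. A i j * x j)"
  shows "\<forall>j\<in>I. int p dvd x j"
proof -
  define m where "m = card I"
  obtain f where f: "bij_betw f {0..<m} I" using ex_bij_betw_nat_finite[OF I] m_def by auto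
  obtain g where g: "bij_betw g {0..<m} R" using ex_bij_betw_nat_finite[OF R] m_def card by auto
  have fI: "f b \<in> I" if "b < m" for b using f that by (auto simp: bij_betw_def)
  have gR: "g a \<in> R" if "a < m" for a using g that by (auto simp: bij_betw_def)
  define Q where "Q = gmat m m (\<lambda>a b. A (g a) (f b))"
  have Qc: "Q \<in> carrier_mat m m" by (simp add: Q_def)
  have Qv: "(Q *\<^sub>v v) $ a = (\<Sum>b<m. A (g a) (f b) * v $ b)" if "a < m" "v \<in> carrier_vec m" for a v
    using that by (simp add: Q_def gmat_def scalar_prod_def atLeast0LessThan row_def)
  have detQ: "det Q \<noteq> 0"
  proof
    assume "det Q = 0"
    then obtain v where v: "v \<in> carrier_vec m" "v \<noteq> 0\<^sub>v m" "Q *\<^sub>v v = 0\<^sub>v m"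
      using det_0_iff_vec_prod_zero[OF Qc] by auto
    define y where "y = (\<lambda>j. if j \<in> I then v $ (inv_into {0..<m} f j) else 0)"
    note K = kernel_from_vec[OF f v(1) v(2)]
    have "\<forall>i\<in>R. (\<Sum>j\<in>I. A i j * y j) = 0"
    proof
      fix i assume i: "i \<in> R"
      then obtain a where a: "a < m" "g a = i" using g by (auto simp: bij_betw_def)
      have "(\<Sum>j\<in>I. A i j * y j) = (\<Sum>b<m. A i (f b) * v $ b)" unfolding y_def by (rule K(2))
      also have "\<dots> = (Q *\<^sub>v v) $ a" using a v(1) Qv by simp
      also have "\<dots> = 0" using v(3) a by simp
      finally show "(\<Sum>j\<in>I. A i j * y j) = 0" .
    qed
    then have "\<forall>j\<in>I. y j = 0" using tk unfolding tk_def by blast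
    then show False using K(1) unfolding y_def by blast
  qed
  have "(det Q)^2 \<le> (\<Prod>a<m. \<Sum>b<m. A (g a) (f b) * A (g a) (f b))"
    unfolding Q_def by (rule hadamard_int)
  also have "\<dots> \<le> (\<Prod>a<m. int m * B^2)"
  proof (rule prod_mono)
    fix a assume a: "a \<in> {..<m}"
    have "(\<Sum>b<m. A (g a) (f b) * A (g a) (f b)) \<le> (\<Sum>b<m. B^2)"
    proof (rule sum_mono)
      fix b assume b: "b \<in> {..<m}"
      have "\<bar>A (g a) (f b)\<bar> \<le> B" using AB gR fI a b by auto
      then have "\<bar>A (g a) (f b)\<bar> * \<bar>A (g a) (f b)\<bar> \<le> B * B" by (intro mult_mono) auto
      then show "A (g a) (f b) * A (g a) (f b) \<le> B^2" by (simp add: power2_eq_square abs_mult_self_eq)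
    qed
    then show "0 \<le> (\<Sum>b<m. A (g a) (f b) * A (g a) (f b)) \<and> (\<Sum>b<m. A (g a) (f b) * A (g a) (f b)) \<le> int m * B^2"
      by (auto intro: sum_nonneg)
  qed
  also have "\<dots> = (int m * B^2)^m" by simp
  also have "\<dots> < (int p)^2" using bound m_def by simp
  finally have "(det Q)^2 < (int p)^2" .
  then have "\<bar>det Q\<bar>^2 < (int p)^2" by simp
  then have "\<bar>det Q\<bar> < int p" by (rule power_less_imp_less_base) auto
  then have ndvd: "\<not> int p dvd det Q" using dvd_imp_le_int[OF detQ, of "int p"] by auto
  have pr: "prime (int p)" using p by simp
  show ?thesis
  proof
    fix j assume j: "j \<in> I"
    then obtain b where b: "b < m" "f b = j" using f by (auto simp: bij_betw_def)
    define xv where "xv = vec m (\<lambda>b. x (f b))"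
    have xvc: "xv \<in> carrier_vec m" by (simp add: xv_def)
    have Qx: "int p dvd (Q *\<^sub>v xv) $ a" if a: "a < m" for a
    proof -
      have "(Q *\<^sub>v xv) $ a = (\<Sum>b<m. A (g a) (f b) * x (f b))" using Qv[OF a xvc] by (simp add: xv_def)
      also have "\<dots> = (\<Sum>j\<in>I. A (g a) j * x j)"
        using sum.reindex_bij_betw[OF f, of "\<lambda>j. A (g a) j * x j"] by (simp add: atLeast0LessThan)
      finally show ?thesis using x gR[OF a] by simp
    qed
    have "(adj_mat Q * Q) *\<^sub>v xv = adj_mat Q *\<^sub>v (Q *\<^sub>v xv)"
      using adj_mat(1)[OF Qc] Qc xvc by (intro assoc_mult_mat_vec) auto
    then have "(det Q \<cdot>\<^sub>m 1\<^sub>m m) *\<^sub>v xv = adj_mat Q *\<^sub>v (Q *\<^sub>v xv)" using adj_mat(3)[OF Qc] by simp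
    then have "det Q * x j = (adj_mat Q *\<^sub>v (Q *\<^sub>v xv)) $ b"
      using smult_one_mat_vec[OF xvc b(1), of "det Q"] b by (simp add: xv_def)
    also have "\<dots> = row (adj_mat Q) b \<bullet> (Q *\<^sub>v xv)"
      using adj_mat(1)[OF Qc] b by simp
    also have "int p dvd \<dots>"
      unfolding scalar_prod_def
    proof (intro dvd_sum dvd_mult)
      fix a assume "a \<in> {0..<dim_vec (Q *\<^sub>v xv)}"
      then show "int p dvd (Q *\<^sub>v xv) $ a" using Qx Qc by auto
    qed
    finally have "int p dvd det Q * x j" .
    then show "int p dvd x j" using pr ndvd by (simp add: prime_dvd_mult_iff)
  qed
qed



definition coefv :: "nat \<Rightarrow> (nat \<Rightarrow> int) \<Rightarrow> nat \<Rightarrow> int" where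
  "coefv n v j = (if j < n then v (n + j) else - v (j - n))"

definition qsupp :: "nat \<Rightarrow> (nat \<Rightarrow> int) \<Rightarrow> nat set" where
  "qsupp n e = {l. l < n \<and> (e l, e (n + l)) \<noteq> (0, 0)}"

definition qcols :: "nat \<Rightarrow> nat set \<Rightarrow> nat set" where
  "qcols n T = T \<union> (\<lambda>l. n + l) ` T"

lemma weight_supp: "weight n e = card (qsupp n e)"
  by (simp add: weight_def qsupp_def)

lemma sum_2n: "(\<Sum>j<2*(n::nat). F j) = (\<Sum>l<n. F l) + (\<Sum>l<n. F (n + l))"
proof -
  have "{..<2*n} = {..<n} \<union> (\<lambda>l. n + l) ` {..<n}"
  proof (rule equalityI)
    show "{..<2*n} \<subseteq> {..<n} \<union> (\<lambda>l. n + l) ` {..<n}"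
    proof
      fix x assume x: "x \<in> {..<2*n}"
      show "x \<in> {..<n} \<union> (\<lambda>l. n + l) ` {..<n}"
      proof (cases "x < n")
        case False
        then have "x = n + (x - n)" "x - n < n" using x by auto
        then show ?thesis by blast
      qed simp
    qed
  qed auto
  moreover have "{..<n} \<inter> (\<lambda>l. n + l) ` {..<n} = {}" by (auto simp: disjoint_iff)
  ultimately have "(\<Sum>j<2*n. F j) = (\<Sum>l<n. F l) + (\<Sum>j\<in>(\<lambda>l. n + l) ` {..<n}. F j)"
    by (simp add: sum.union_disjoint)
  also have "(\<Sum>j\<in>(\<lambda>l. n + l) ` {..<n}. F j) = (\<Sum>l<n. F (n + l))"
    by (subst sum.reindex) (auto simp: inj_on_def)
  finally show ?thesis .
qed

lemma sympl_as_sum: "sympl n e v = (\<Sum>j<2*n. coefv n v j * e j)"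
  unfolding sum_2n sympl_def coefv_def by (simp add: sum_subtractf algebra_simps sum_negf)

lemma cols_sub: "T \<subseteq> {..<n} \<Longrightarrow> qcols n T \<subseteq> {..<2*n}"
  by (auto simp: qcols_def)

lemma finite_cols: "finite T \<Longrightarrow> finite (qcols n T)"
  by (simp add: qcols_def)

lemma card_cols: "T \<subseteq> {..<n} \<Longrightarrow> card (qcols n T) = 2 * card T"
proof -
  assume T: "T \<subseteq> {..<n}"
  then have f: "finite T" using finite_subset by blast
  have "T \<inter> (\<lambda>l. n + l) ` T = {}" using T by auto
  then have "card (qcols n T) = card T + card ((\<lambda>l. n + l) ` T)"
    unfolding qcols_def using f by (simp add: card_Un_disjoint)
  also have "card ((\<lambda>l. n + l) ` T) = card T" by (rule card_image) (auto simp: inj_on_def)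
  finally show ?thesis by simp
qed

lemma outside_supp: "j < 2*n \<Longrightarrow> j \<notin> qcols n (qsupp n e) \<Longrightarrow> e j = 0"
proof -
  assume j: "j < 2*n" "j \<notin> qcols n (qsupp n e)"
  show "e j = 0"
  proof (cases "j < n")
    case True
    then show ?thesis using j by (auto simp: qcols_def qsupp_def)
  next
    case False
    then have jj: "j = n + (j - n)" "j - n < n" using j by auto
    then have "j - n \<notin> qsupp n e" using j(2) unfolding qcols_def by blast
    then show ?thesis using jj by (auto simp: qsupp_def)
  qed
qed

lemma sympl_restrict:
  assumes "T \<subseteq> {..<n}" "\<And>j. j < 2*n \<Longrightarrow> j \<notin> qcols n T \<Longrightarrow> e j = 0"
  shows "sympl n e v = (\<Sum>j\<in>qcols n T. coefv n v j * e j)"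
  unfolding sympl_as_sum
  by (rule sum.mono_neutral_right) (use assms cols_sub in \<open>auto simp: coefv_def\<close>)

lemma supp_sub: "qsupp n e \<subseteq> {..<n}" by (auto simp: qsupp_def)

lemma weight_mono:
  assumes "\<And>l. l < n \<Longrightarrow> e l = 0 \<Longrightarrow> e (n + l) = 0 \<Longrightarrow> e' l = 0 \<and> e' (n + l) = 0"
  shows "weight n e' \<le> weight n e"
  unfolding weight_supp
  by (rule card_mono) (use assms in \<open>auto simp: qsupp_def\<close>)

lemma weight_le_card:
  assumes "T \<subseteq> {..<n}" "\<And>j. j < 2*n \<Longrightarrow> j \<notin> qcols n T \<Longrightarrow> e j = 0"
  shows "weight n e \<le> card T"
proof -
  have "qsupp n e \<subseteq> T"
  proof
    fix l assume l: "l \<in> qsupp n e"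
    then have ln: "l < n" by (auto simp: qsupp_def)
    show "l \<in> T"
    proof (rule ccontr)
      assume "l \<notin> T"
      then have "l \<notin> qcols n T" "n + l \<notin> qcols n T" using assms(1) ln by (auto simp: qcols_def)
      then have "e l = 0" "e (n + l) = 0" using assms(2) ln by auto
      then show False using l by (auto simp: qsupp_def)
    qed
  qed
  then show ?thesis unfolding weight_supp
    using assms(1) by (intro card_mono) (auto intro: finite_subset)
qed

lemma EX:
  fixes M :: "nat \<Rightarrow> nat \<Rightarrow> int"
  assumes k1: "1 \<le> k" and kn: "k \<le> n"
  shows "\<exists>e. (\<forall>j \<ge> 2 * n. e j = 0) \<and> nonzero_vec n e \<and>
      (\<forall>i < k. sympl n e (M i) = 0) \<and> weight n e \<le> k"
proof -
  define I where "I = qcols n {..<k}"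
  have Tsub: "{..<k} \<subseteq> {..<n}" using kn by auto
  have cI: "card I = 2 * k" unfolding I_def using card_cols[OF Tsub] by simp
  have fI: "finite I" unfolding I_def by (simp add: finite_cols)
  have Isub: "I \<subseteq> {..<2*n}" unfolding I_def using cols_sub[OF Tsub] .
  from LA1[OF fI finite_lessThan[of k], of "\<lambda>i j. coefv n (M i) j"] k1 cI obtain y where
    y: "\<exists>j\<in>I. y j \<noteq> 0" "\<forall>i\<in>{..<k}. (\<Sum>j\<in>I. coefv n (M i) j * y j) = 0" by auto
  define e where "e j = (if j \<in> I then y j else 0)" for j
  have out: "e j = 0" if "j < 2*n" "j \<notin> qcols n {..<k}" for j using that by (simp add: e_def I_def)
  show ?thesis
  proof (intro exI conjI allI impI)
    fix j assume "2 * n \<le> j" then show "e j = 0" using Isub by (auto simp: e_def)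
  next
    show "nonzero_vec n e" using y(1) Isub by (auto simp: nonzero_vec_def e_def)
  next
    fix i assume i: "i < k"
    have "sympl n e (M i) = (\<Sum>j\<in>I. coefv n (M i) j * e j)"
      unfolding I_def by (rule sympl_restrict[OF Tsub out])
    also have "\<dots> = (\<Sum>j\<in>I. coefv n (M i) j * y j)" by (rule sum.cong) (auto simp: e_def)
    finally show "sympl n e (M i) = 0" using y(2) i by simp
  next
    show "weight n e \<le> k" using weight_le_card[OF Tsub out] by simp
  qed
qed

lemma sympl_scale: "sympl n (\<lambda>j. c * e j) v = c * sympl n e v"
  unfolding sympl_def by (simp add: sum_distrib_left algebra_simps sum_subtractf)

lemma DIV:
  fixes r :: int
  assumes r: "r > 1"
  shows "(\<forall>j \<ge> 2 * n. e j = 0) \<Longrightarrow> nonzero_vec n e \<Longrightarrow> (\<forall>i < k. sympl n e (G i) = 0) \<Longrightarrow>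
    \<exists>e1. (\<forall>j \<ge> 2 * n. e1 j = 0) \<and> (\<exists>j<2*n. \<not> r dvd e1 j) \<and> (\<forall>i < k. sympl n e1 (G i) = 0) \<and>
         (\<forall>j. e1 j = 0 \<longleftrightarrow> e j = 0)"
proof (induction "nat (\<Sum>j<2*n. \<bar>e j\<bar>)" arbitrary: e rule: less_induct)
  case less
  show ?case
  proof (cases "\<exists>j<2*n. \<not> r dvd e j")
    case True
    then show ?thesis using less.prems by blast
  next
    case False
    define e2 where "e2 j = e j div r" for j
    have ee: "e j = r * e2 j" for j
    proof (cases "j < 2*n")
      case True then show ?thesis using False by (simp add: e2_def)
    next
      case F: False then show ?thesis using less.prems(1) by (simp add: e2_def)
    qed
    have z: "e2 j = 0 \<longleftrightarrow> e j = 0" for j using ee r by auto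
    have p1: "\<forall>j \<ge> 2 * n. e2 j = 0" using less.prems(1) z by auto
    have p2: "nonzero_vec n e2" using less.prems(2) z by (auto simp: nonzero_vec_def)
    have p3: "\<forall>i < k. sympl n e2 (G i) = 0"
    proof (intro allI impI)
      fix i assume "i < k"
      then have "sympl n (\<lambda>j. r * e2 j) (G i) = 0" using less.prems(3) ee by (metis (no_types) ext)
      then show "sympl n e2 (G i) = 0" using r by (simp add: sympl_scale)
    qed
    have "(\<Sum>j<2*n. \<bar>e2 j\<bar>) < (\<Sum>j<2*n. \<bar>e j\<bar>)"
    proof (rule sum_strict_mono_ex1)
      have "\<bar>e2 j\<bar> \<le> r * \<bar>e2 j\<bar>" for j using r
        by (metis abs_ge_zero less_imp_le mult_1 mult_right_mono)
      then show "\<forall>j\<in>{..<2*n}. \<bar>e2 j\<bar> \<le> \<bar>e j\<bar>" using r by (auto simp: ee abs_mult)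
      from p2 obtain j where j: "j < 2*n" "e2 j \<noteq> 0" by (auto simp: nonzero_vec_def)
      then have "\<bar>e2 j\<bar> < \<bar>e j\<bar>" using r by (simp add: ee abs_mult)
      then show "\<exists>j\<in>{..<2*n}. \<bar>e2 j\<bar> < \<bar>e j\<bar>" using j by blast
    qed simp
    moreover have "0 \<le> (\<Sum>j<2*n. \<bar>e2 j\<bar>)" by (simp add: sum_nonneg)
    ultimately have "nat (\<Sum>j<2*n. \<bar>e2 j\<bar>) < nat (\<Sum>j<2*n. \<bar>e j\<bar>)"
      by linarith
    from less.hyps[OF this p1 p2 p3] show ?thesis using z by auto
  qed
qed

lemma RED:
  fixes r :: int
  assumes r: "r > 1"
    and e: "\<forall>j \<ge> 2 * n. e j = 0" "nonzero_vec n e" "\<forall>i < k. sympl n e (G i) = 0"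
    and G: "\<forall>i < k. \<forall>j < 2 * n. [G' i j = G i j] (mod r)"
  shows "\<exists>e'. vec_mod r n e' \<and> nonzero_vec n e' \<and> (\<forall>i < k. sympl n e' (G' i) mod r = 0) \<and>
      weight n e' \<le> weight n e"
proof -
  obtain e1 where e1: "\<forall>j \<ge> 2 * n. e1 j = 0" "\<exists>j<2*n. \<not> r dvd e1 j" "\<forall>i < k. sympl n e1 (G i) = 0"
    "\<forall>j. e1 j = 0 \<longleftrightarrow> e j = 0"
    using DIV[OF r e] by blast
  define e' where "e' j = (if j < 2 * n then e1 j mod r else 0)" for j
  show ?thesis
  proof (intro exI conjI allI impI)
    show "vec_mod r n e'" using r by (auto simp: vec_mod_def e'_def)
    show "nonzero_vec n e'" using e1(2) by (auto simp: nonzero_vec_def e'_def dvd_eq_mod_eq_0)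
    show "weight n e' \<le> weight n e"
      by (rule weight_mono) (use e1(4) in \<open>auto simp: e'_def, metis mod_0, metis mod_0\<close>)
    fix i assume i: "i < k"
    have "[sympl n e' (G' i) = sympl n e1 (G i)] (mod r)"
      unfolding sympl_def
    proof (rule cong_sum)
      fix l assume l: "l \<in> {..<n}"
      have c1: "[G' i (n + l) = G i (n + l)] (mod r)" "[G' i l = G i l] (mod r)" using G i l by auto
      have c2: "[e' l = e1 l] (mod r)" "[e' (n + l) = e1 (n + l)] (mod r)" using l by (auto simp: e'_def)
      show "[G' i (n + l) * e' l - G' i l * e' (n + l) = G i (n + l) * e1 l - G i l * e1 (n + l)] (mod r)"
        by (intro cong_diff cong_mult c1 c2)
    qed
    then show "sympl n e' (G' i) mod r = 0" using e1(3) i by (simp add: cong_def)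
  qed
qed


lemma maxB:
  assumes "i < k" "j < 2*n"
  shows "\<bar>M i j\<bar> \<le> max_abs_entry n k M"
  unfolding max_abs_entry_def
proof (rule Max_ge)
  have "{\<bar>M i j\<bar> |i j. i < k \<and> j < 2 * n} \<subseteq> (\<lambda>(i,j). \<bar>M i j\<bar>) ` ({..<k} \<times> {..<2*n})" by auto
  then show "finite {\<bar>M i j\<bar> |i j. i < k \<and> j < 2 * n}" by (rule finite_subset) auto
  show "\<bar>M i j\<bar> \<in> {\<bar>M i j\<bar> |i j. i < k \<and> j < 2 * n}" using assms by blast
qed

lemma BND:
  fixes B :: int and w D p :: nat
  assumes B: "B \<ge> 0" and w: "1 \<le> w" "w \<le> D - 1"
    and p: "int p > B ^ (2*(D-1)) * int (2*(D-1)) ^ (D-1)"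
  shows "(int (2*w) * B^2)^(2*w) < (int p)^2"
proof -
  define X where "X = int (2*w) ^ w * B ^ (2*w)"
  have "(int (2*w) * B^2)^(2*w) = X^2"
    unfolding X_def by (simp add: power_mult_distrib power_mult[symmetric] mult.commute)
  moreover have "X < int p"
  proof (cases "B = 0")
    case True
    then have "X = 0" using w by (simp add: X_def)
    moreover have "int p > 0"
    proof -
      have "2*(D-1) \<noteq> 0" using w by simp
      then have "B ^ (2*(D-1)) = 0" using True by (simp add: zero_power)
      then have "B ^ (2*(D-1)) * int (2*(D-1)) ^ (D-1) = 0" by simp
      then show ?thesis using p by linarith
    qed
    ultimately show ?thesis by simp
  next
    case False
    then have B1: "B \<ge> 1" using B by simp
    have "int (2*w) ^ w \<le> int (2*(D-1)) ^ w" using w by (intro power_mono) auto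
    also have "\<dots> \<le> int (2*(D-1)) ^ (D-1)" using w by (intro power_increasing) auto
    finally have a: "int (2*w) ^ w \<le> int (2*(D-1)) ^ (D-1)" .
    have b: "B ^ (2*w) \<le> B ^ (2*(D-1))" using w B1 by (intro power_increasing) auto
    have "X \<le> int (2*(D-1)) ^ (D-1) * B ^ (2*(D-1))"
      unfolding X_def using a b B by (intro mult_mono) auto
    then show ?thesis using p by (simp add: mult.commute)
  qed
  moreover have "X \<ge> 0" unfolding X_def using B by simp
  ultimately show ?thesis by (simp add: power_strict_mono)
qed

lemma sympl_mod_cong: "[sympl n e (\<lambda>j. G j mod r) = sympl n e G] (mod r)"
  unfolding sympl_def
  by (intro cong_sum cong_diff cong_mult) (auto simp: cong_def)

lemma LB:
  fixes M :: "nat \<Rightarrow> nat \<Rightarrow> int" and p :: nat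
  assumes p: "prime p" and k1: "1 \<le> k" and kn: "k \<le> n"
    and D: "D = int_distance n k M"
    and bnd: "int p > max_abs_entry n k M ^ (2*(D-1)) * int (2*(D-1)) ^ (D-1)"
    and e: "vec_mod (int p) n e" "nonzero_vec n e" "\<forall>i<k. sympl n e (\<lambda>j. M i j mod int p) mod int p = 0"
  shows "D \<le> weight n e"
proof (rule ccontr)
  assume "\<not> D \<le> weight n e"
  then have wD: "weight n e < D" by simp
  define T where "T = qsupp n e"
  define I where "I = qcols n T"
  define B where "B = max_abs_entry n k M"
  define A where "A i j = coefv n (M i) j" for i j
  have Tn: "T \<subseteq> {..<n}" unfolding T_def by (rule supp_sub)
  have fT: "finite T" using Tn finite_subset by blast
  have fI: "finite I" unfolding I_def using fT by (rule finite_cols)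
  have I2n: "I \<subseteq> {..<2*n}" unfolding I_def using cols_sub[OF Tn] .
  have out: "e j = 0" if "j < 2*n" "j \<notin> I" for j using outside_supp that unfolding I_def T_def by blast
  have wT: "weight n e = card T" unfolding T_def by (rule weight_supp)
  have cI: "card I = 2 * weight n e" unfolding I_def wT by (rule card_cols[OF Tn])
  have w1: "1 \<le> weight n e"
  proof -
    from e(2) obtain j where j: "j < 2*n" "e j \<noteq> 0" by (auto simp: nonzero_vec_def)
    then have "j \<in> I" using out by blast
    then have "I \<noteq> {}" by blast
    then have "card I > 0" using fI by auto
    then show ?thesis using cI by simp
  qed
  have tk: "tk A {..<k} I"
    unfolding tk_def
  proof (intro allI impI)
    fix y assume y: "\<forall>i\<in>{..<k}. (\<Sum>j\<in>I. A i j * y j) = 0"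
    show "\<forall>j\<in>I. y j = 0"
    proof (rule ccontr)
      assume "\<not> (\<forall>j\<in>I. y j = 0)"
      then obtain j0 where j0: "j0 \<in> I" "y j0 \<noteq> 0" by blast
      define e' where "e' j = (if j \<in> I then y j else 0)" for j
      have out': "e' j = 0" if "j < 2*n" "j \<notin> qcols n T" for j using that by (simp add: e'_def I_def)
      have v1: "\<forall>j \<ge> 2 * n. e' j = 0" using I2n by (auto simp: e'_def)
      have v2: "nonzero_vec n e'" using j0 I2n by (auto simp: nonzero_vec_def e'_def intro!: exI[of _ j0])
      have v3: "\<forall>i < k. sympl n e' (M i) = 0"
      proof (intro allI impI)
        fix i assume i: "i < k"
        have "sympl n e' (M i) = (\<Sum>j\<in>I. coefv n (M i) j * e' j)"
          unfolding I_def by (rule sympl_restrict[OF Tn out'])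
        also have "\<dots> = (\<Sum>j\<in>I. A i j * y j)" by (rule sum.cong) (auto simp: e'_def A_def)
        finally show "sympl n e' (M i) = 0" using y i by simp
      qed
      have "int_distance n k M \<le> weight n e'"
        unfolding int_distance_def by (rule Least_le) (use v1 v2 v3 in blast)
      also have "\<dots> \<le> card T" by (rule weight_le_card[OF Tn out'])
      finally show False using wD D wT by simp
    qed
  qed
  obtain R' where R': "R' \<subseteq> {..<k}" "card R' = card I" "tk A R' I"
    using LA2[OF fI finite_lessThan tk] by blast
  have fR: "finite R'" using R'(1) finite_subset by blast
  have B0: "B \<ge> 0" using maxB[of 0 k 0 n M] k1 kn unfolding B_def by auto
  have AB: "\<forall>i\<in>R'. \<forall>j\<in>I. \<bar>A i j\<bar> \<le> B"
  proof (intro ballI)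
    fix i j assume i: "i \<in> R'" and j: "j \<in> I"
    then have ik: "i < k" and jn: "j < 2*n" using R'(1) I2n by auto
    show "\<bar>A i j\<bar> \<le> B"
    proof (cases "j < n")
      case True
      then show ?thesis using maxB[of i k "n + j" n M] ik by (simp add: A_def coefv_def B_def)
    next
      case False
      then show ?thesis using maxB[of i k "j - n" n M] ik jn by (simp add: A_def coefv_def B_def)
    qed
  qed
  have bound: "(int (card I) * B^2)^(card I) < (int p)^2"
    using BND[OF B0 w1, of D p] wD bnd unfolding cI B_def by simp
  have x: "\<forall>i\<in>R'. int p dvd (\<Sum>j\<in>I. A i j * e j)"
  proof
    fix i assume "i \<in> R'"
    then have i: "i < k" using R'(1) by auto
    have "sympl n e (M i) = (\<Sum>j\<in>I. A i j * e j)"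
      unfolding I_def A_def by (rule sympl_restrict[OF Tn]) (use out in \<open>auto simp: I_def\<close>)
    moreover have "[sympl n e (\<lambda>j. M i j mod int p) = sympl n e (M i)] (mod int p)"
      by (rule sympl_mod_cong)
    ultimately show "int p dvd (\<Sum>j\<in>I. A i j * e j)"
      using e(3) i by (simp add: cong_def dvd_eq_mod_eq_0)
  qed
  have dv: "\<forall>j\<in>I. int p dvd e j" by (rule CP[OF fI fR R'(2) R'(3) p AB bound x])
  have "e j = 0" if "j < 2*n" for j
  proof (cases "j \<in> I")
    case True
    have "0 \<le> e j" "e j < int p" using e(1) that by (auto simp: vec_mod_def)
    then show ?thesis using dv True by (metis zdvd_not_zless dvd_imp_le_int abs_of_nonneg not_less order_le_less)
  next
    case False then show ?thesis using out that by blast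
  qed
  then show False using e(2) by (auto simp: nonzero_vec_def)
qed


lemma pow_mono2: "a \<le> b \<Longrightarrow> int (2*a) ^ a \<le> int (2*b) ^ b"
proof (cases "a = 0")
  case True
  assume "a \<le> b"
  show ?thesis
  proof (cases "b = 0")
    case False
    then have "1 \<le> int (2*b)" by simp
    then have "1 \<le> int (2*b) ^ b" by (rule one_le_power)
    then show ?thesis using True by simp
  qed (use True in simp)
next
  case False
  assume ab: "a \<le> b"
  have "int (2*a) ^ a \<le> int (2*b) ^ a" using ab by (intro power_mono) auto
  also have "\<dots> \<le> int (2*b) ^ b" using ab False by (intro power_increasing) auto
  finally show ?thesis .
qed

theorem corollary2:
  fixes q :: nat and n k d :: nat and S M :: "nat \<Rightarrow> nat \<Rightarrow> int"
  assumes "prime q"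
    and "1 \<le> k"
    and "stabilizer_code (int q) n k S"
    and "code_distance (int q) n k S = d"
    and "nondegenerate (int q) n k S d"
    and "invariant_form (int q) n k S M"
  shows "d \<le> int_distance n k M \<and> int_distance n k M \<le> k \<and>
    (\<forall>p :: nat. prime p \<and>
        int p > max_abs_entry n k M ^ (2 * (int_distance n k M - 1)) *
                  int (2 * (int_distance n k M - 1)) ^ (int_distance n k M - 1)
      \<longrightarrow> code_distance (int p) n k (\<lambda>i j. M i j mod int p) = int_distance n k M) \<and>
    (\<forall>p :: nat. prime p \<and>
        int p > max_abs_entry n k M ^ (2 * (k - 1)) * int (2 * (k - 1)) ^ (k - 1)
      \<longrightarrow> code_distance (int p) n k (\<lambda>i j. M i j mod int p) = int_distance n k M)"
proof -
  note q = assms(1) and k1 = assms(2)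
  have kn: "k \<le> n" using assms(3) by (simp add: stabilizer_code_def)
  define D where "D = int_distance n k M"
  define B where "B = max_abs_entry n k M"
  define P where "P w \<longleftrightarrow> (\<exists>e. (\<forall>j \<ge> 2 * n. e j = 0) \<and> nonzero_vec n e \<and>
      (\<forall>i < k. sympl n e (M i) = 0) \<and> weight n e = w)" for w
  have Dd: "D = (LEAST w. P w)" unfolding D_def int_distance_def P_def by simp
  obtain e0 where e0: "\<forall>j \<ge> 2 * n. e0 j = 0" "nonzero_vec n e0" "\<forall>i < k. sympl n e0 (M i) = 0"
      "weight n e0 \<le> k"
    using EX[OF k1 kn, of M] by blast
  have P0: "P (weight n e0)" unfolding P_def using e0 by blast
  have Dk: "D \<le> k" using Least_le[of P, OF P0] e0(4) Dd by simp
  have "P D" unfolding Dd by (rule LeastI[of P, OF P0])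
  then obtain eD where eD: "\<forall>j \<ge> 2 * n. eD j = 0" "nonzero_vec n eD" "\<forall>i < k. sympl n eD (M i) = 0"
      "weight n eD = D" unfolding P_def by blast
  have part1: "d \<le> D"
  proof -
    have q1: "int q > 1" using q prime_gt_1_nat by simp
    have cg: "\<forall>i < k. \<forall>j < 2 * n. [S i j = M i j] (mod int q)"
      using assms(6) by (auto simp: invariant_form_def cong_sym)
    obtain e' where e': "vec_mod (int q) n e'" "nonzero_vec n e'" "\<forall>i < k. sympl n e' (S i) mod int q = 0"
      "weight n e' \<le> weight n eD"
      using RED[OF q1 eD(1-3) cg] by blast
    have "code_distance (int q) n k S \<le> weight n e'"
      unfolding code_distance_def by (rule Least_le) (use e' in blast)
    then show ?thesis using assms(4) e'(4) eD(4) by simp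
  qed
  have part3: "code_distance (int p) n k (\<lambda>i j. M i j mod int p) = D"
    if p: "prime p" and bnd: "int p > B ^ (2 * (D - 1)) * int (2 * (D - 1)) ^ (D - 1)" for p :: nat
  proof -
    have p1: "int p > 1" using p prime_gt_1_nat by simp
    define Q where "Q w \<longleftrightarrow> (\<exists>e. vec_mod (int p) n e \<and> nonzero_vec n e \<and>
      (\<forall>i < k. sympl n e ((\<lambda>i j. M i j mod int p) i) mod int p = 0) \<and> weight n e = w)" for w
    have CQ: "code_distance (int p) n k (\<lambda>i j. M i j mod int p) = (LEAST w. Q w)"
      unfolding code_distance_def Q_def by simp
    have cg: "\<forall>i < k. \<forall>j < 2 * n. [M i j mod int p = M i j] (mod int p)" by (simp add: cong_def)
    obtain e' where e': "vec_mod (int p) n e'" "nonzero_vec n e'"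
      "\<forall>i < k. sympl n e' (\<lambda>j. M i j mod int p) mod int p = 0" "weight n e' \<le> weight n eD"
      using RED[OF p1 eD(1-3) cg] by blast
    have Qe: "Q (weight n e')" unfolding Q_def using e' by auto
    have up: "(LEAST w. Q w) \<le> D" using Least_le[of Q, OF Qe] e'(4) eD(4) by simp
    have "Q (LEAST w. Q w)" by (rule LeastI[of Q, OF Qe])
    then obtain e'' where e'': "vec_mod (int p) n e''" "nonzero_vec n e''"
      "\<forall>i < k. sympl n e'' (\<lambda>j. M i j mod int p) mod int p = 0" "weight n e'' = (LEAST w. Q w)"
      unfolding Q_def by auto
    have "D \<le> weight n e''"
      by (rule LB[OF p k1 kn D_def _ e''(1-3)]) (use bnd in \<open>simp add: B_def\<close>)
    then show ?thesis using up e''(4) CQ by simp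
  qed
  have B0: "B \<ge> 0" using maxB[of 0 k 0 n M] k1 kn unfolding B_def by auto
  have part4: "code_distance (int p) n k (\<lambda>i j. M i j mod int p) = D"
    if p: "prime p" and bnd: "int p > B ^ (2 * (k - 1)) * int (2 * (k - 1)) ^ (k - 1)" for p :: nat
  proof (rule part3[OF p])
    have p2: "int p \<ge> 2" using p prime_ge_2_nat by simp
    show "int p > B ^ (2 * (D - 1)) * int (2 * (D - 1)) ^ (D - 1)"
    proof (cases "B = 0")
      case True
      show ?thesis
      proof (cases "D - 1 = 0")
        case True
        then show ?thesis using p2 by simp
      next
        case False
        then have "B ^ (2 * (D - 1)) = 0" using \<open>B = 0\<close> by (simp add: zero_power)
        then have "B ^ (2 * (D - 1)) * int (2 * (D - 1)) ^ (D - 1) = 0" by simp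
        then show ?thesis using p2 by linarith
      qed
    next
      case False
      then have B1: "B \<ge> 1" using B0 by simp
      have a: "B ^ (2 * (D - 1)) \<le> B ^ (2 * (k - 1))" using B1 Dk by (intro power_increasing) auto
      have b: "int (2 * (D - 1)) ^ (D - 1) \<le> int (2 * (k - 1)) ^ (k - 1)" using Dk by (intro pow_mono2) auto
      have "B ^ (2 * (D - 1)) * int (2 * (D - 1)) ^ (D - 1) \<le> B ^ (2 * (k - 1)) * int (2 * (k - 1)) ^ (k - 1)"
        using a b B0 by (intro mult_mono) auto
      then show ?thesis using bnd by linarith
    qed
  qed
  show ?thesis using part1 Dk part3 part4 unfolding D_def B_def by blast
qed


end
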